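(* Let $\mu>1$, $\gamma=\mu\gamma_1^N$, $\rho\in(0,1)$, $0<\alpha<1/4$, $\rho_k=4k^\alpha$. There exist constants $A_5<\infty$ and $\delta_0>0$ such that for all $N\ge3$, all $0<\delta<\delta_0$ and all $z\in\widehat C_\delta$, $$\Big|\widetilde G_N(z)-\Big(-\tfrac12z_0^2+\tfrac14z_0^4+\tfrac12\sum_{k=1}^{N-1}\lambda_{k,N}|z_k|^2+\tfrac32 z_0^2\sum_{k=1}^{N-1}|z_k|^2\Big)\Big|\le A_5\delta^3,$$ where $\widehat C_\delta=\{z\in\widehat{\mathbb{R}}^N: z_0\in(-1+\rho,1-\rho),\ |z_k|\le\delta r_{k,N}/\sqrt{\lambda_{k,N}}\ \text{for }1\le k\le N-1\}$.
   Context: Indices modulo $N$; $F_{\gamma,N}(x)=\sum_{i=0}^{N-1}(\tfrac14x_i^4-\tfrac12x_i^2)+\tfrac\gamma4\sum_{i=0}^{N-1}(x_i-x_{i+1})^2$; $\gamma_1^N=\frac1{2\sin^2(\pi/N)}$; $G_N=N^{-1}F_{\gamma,N}$; $\lambda_{k,N}=-1+2\gamma\sin^2(k\pi/N)$ (positive for $1\le k\le N-1$ when $\gamma>\gamma_1^N$). $\omega=e^{2\pi i/N}$; $\widehat{\mathbb{R}}^N=\{z\in\mathbb{C}^N:z_k=\overline{z_{N-k}}\}$; $x_j(Nz)=\sum_k\omega^{jk}z_k$; $\widetilde G_N(z)=G_N(x(Nz))$. $r_{k,N}=r_{N-k,N}=\rho_k$ for $1\le k\le\lfloor N/2\rfloor$.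 *)

theory Defs
  imports "HOL-Analysis.Analysis"
begin

text \<open>Vectors in R^N / C^N are represented as functions on nat; only indices 0..N-1 matter,
  and indices are taken modulo N.\<close>

definition F_gN :: "real \<Rightarrow> nat \<Rightarrow> (nat \<Rightarrow> real) \<Rightarrow> real" where
  "F_gN \<gamma> N x = (\<Sum>i<N. x i ^ 4 / 4 - x i ^ 2 / 2)
      + \<gamma> / 4 * (\<Sum>i<N. (x i - x ((i + 1) mod N)) ^ 2)"

definition G_N :: "real \<Rightarrow> nat \<Rightarrow> (nat \<Rightarrow> real) \<Rightarrow> real" where
  "G_N \<gamma> N x = F_gN \<gamma> N x / real N"

definition gamma1 :: "nat \<Rightarrow> real" where
  "gamma1 N = 1 / (2 * (sin (pi / real N)) ^ 2)"

definition lam :: "real \<Rightarrow> nat \<Rightarrow> nat \<Rightarrow> real" where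
  "lam \<gamma> N k = -1 + 2 * \<gamma> * (sin (real k * pi / real N)) ^ 2"

definition omegaN :: "nat \<Rightarrow> complex" where
  "omegaN N = cis (2 * pi / real N)"

text \<open>x_j(Nz) = sum_k omega^(jk) z_k; this is real for z in hat R^N, we take the real part.\<close>
definition x_of :: "nat \<Rightarrow> (nat \<Rightarrow> complex) \<Rightarrow> nat \<Rightarrow> real" where
  "x_of N z j = Re (\<Sum>k<N. omegaN N ^ (j * k) * z k)"

definition Gt_N :: "real \<Rightarrow> nat \<Rightarrow> (nat \<Rightarrow> complex) \<Rightarrow> real" where
  "Gt_N \<gamma> N z = G_N \<gamma> N (x_of N z)"

definition hatR :: "nat \<Rightarrow> (nat \<Rightarrow> complex) set" where
  "hatR N = {z. \<forall>k<N. z k = cnj (z ((N - k) mod N))}"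

text \<open>r_{k,N} = r_{N-k,N} = rho_k = 4 k^alpha for 1 <= k <= floor(N/2).\<close>
definition r_kN :: "real \<Rightarrow> nat \<Rightarrow> nat \<Rightarrow> real" where
  "r_kN \<alpha> N k = 4 * real (min k (N - k)) powr \<alpha>"

definition Chat :: "real \<Rightarrow> real \<Rightarrow> real \<Rightarrow> nat \<Rightarrow> real \<Rightarrow> (nat \<Rightarrow> complex) set" where
  "Chat \<gamma> \<rho> \<alpha> N \<delta> = {z \<in> hatR N. Re (z 0) \<in> {-1 + \<rho> <..< 1 - \<rho>} \<and>
      (\<forall>k \<in> {1..N-1}. cmod (z k) \<le> \<delta> * r_kN \<alpha> N k / sqrt (lam \<gamma> N k))}"

end

theory Submission
  imports Defs "HOL-Library.Log_Nat"
begin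

definition SS :: "nat \<Rightarrow> (nat \<Rightarrow> complex) \<Rightarrow> nat \<Rightarrow> complex" where
  "SS N c j = (\<Sum>k<N. omegaN N ^ (j*k) * c k)"

definition symc :: "nat \<Rightarrow> (nat \<Rightarrow> complex) \<Rightarrow> bool" where
  "symc N c \<longleftrightarrow> (\<forall>k<N. c k = cnj (c ((N - k) mod N)))"

lemma omega_pow: "omegaN N ^ n = cis (2 * pi * real n / real N)"
proof -
  have "omegaN N ^ n = cis (real n * (2*pi/real N))"
    unfolding omegaN_def using Complex.DeMoivre by blast
  then show ?thesis by (simp add: field_simps)
qed

lemma omega_pow_N: "N > 0 \<Longrightarrow> omegaN N ^ (N * m) = 1"
proof -
  assume N: "N > 0"
  have e: "2 * pi * real (N*m) / real N = 2*pi*real m" using N by simp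
  have "cis (2*pi*real m) = 1" using cis_multiple_2pi[of "real m"] Ints_of_nat by blast
  then show ?thesis by (simp only: omega_pow e)
qed

lemma omega_pow_mod: "N > 0 \<Longrightarrow> omegaN N ^ n = omegaN N ^ (n mod N)"
proof -
  assume N: "N > 0"
  have "omegaN N ^ n = omegaN N ^ (N * (n div N) + n mod N)" by simp
  also have "\<dots> = omegaN N ^ (n mod N)" by (simp only: power_add omega_pow_N[OF N]) simp
  finally show ?thesis .
qed

lemma cmod_omega_pow [simp]: "cmod (omegaN N ^ n) = 1"
  by (simp add: omega_pow)

lemma omega_pow_eq_1: "N > 0 \<Longrightarrow> omegaN N ^ e = 1 \<longleftrightarrow> N dvd e"
proof
  assume N: "N > 0" and h: "omegaN N ^ e = 1"
  have "cos (2 * pi * real e / real N) = 1"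
    using h by (simp add: omega_pow cis.ctr complex_eq_iff)
  then obtain n :: int where n: "2 * pi * real e / real N = 2 * pi * real_of_int n"
    by (metis cos_one_2pi_int mult.assoc mult.commute)
  then have "real e = real N * real_of_int n" using N by (simp add: field_simps)
  then have "int e = int N * n" by (metis of_int_eq_iff of_int_mult of_int_of_nat_eq)
  then show "N dvd e" by (metis dvd_triv_left int_dvd_int_iff)
next
  assume N: "N > 0" and "N dvd e"
  then obtain m where "e = N * m" by blast
  then show "omegaN N ^ e = 1" using omega_pow_N[OF N] by (simp only:)
qed

lemma sum_omega: "N > 0 \<Longrightarrow> (\<Sum>j<N. omegaN N ^ (j * e)) = (if N dvd e then of_nat N else 0)"
proof -
  assume N: "N > 0"
  have eq: "(\<Sum>j<N. omegaN N ^ (j * e)) = (\<Sum>j<N. (omegaN N ^ e) ^ j)"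
    by (simp add: power_mult[symmetric] mult.commute)
  show ?thesis
  proof (cases "N dvd e")
    case True
    then have "omegaN N ^ e = 1" using omega_pow_eq_1[OF N] by simp
    then show ?thesis using eq True by simp
  next
    case False
    then have ne: "omegaN N ^ e \<noteq> 1" using omega_pow_eq_1[OF N] by simp
    have "(omegaN N ^ e) ^ N = 1"
      by (simp add: power_mult[symmetric] mult.commute omega_pow_N[OF N])
    then show ?thesis using eq ne False by (simp add: geometric_sum)
  qed
qed

lemma cnj_omega: "N > 0 \<Longrightarrow> k < N \<Longrightarrow> cnj (omegaN N ^ (j*k)) = omegaN N ^ (j * ((N - k) mod N))"
proof -
  assume N: "N > 0" and k: "k < N"
  let ?w = "omegaN N ^ (j*k)" and ?v = "omegaN N ^ (j * ((N - k) mod N))"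
  have "N dvd (j*k + j * ((N - k) mod N))"
  proof (cases "k = 0")
    case True then show ?thesis by simp
  next
    case False
    then have "(N - k) mod N = N - k" using k by simp
    then have "j*k + j * ((N - k) mod N) = j * N" using k by (simp add: algebra_simps)
    then show ?thesis by simp
  qed
  then have "?w * ?v = 1" by (simp add: power_add[symmetric] omega_pow_eq_1[OF N])
  moreover have "?w * cnj ?w = 1"
    by (metis cmod_omega_pow complex_norm_square of_real_1 power_one)
  ultimately have "cnj ?w = (?w * ?v) * cnj ?w" by simp
  also have "\<dots> = ?v * (?w * cnj ?w)" by (simp only: mult_ac)
  also have "\<dots> = ?v" using \<open>?w * cnj ?w = 1\<close> by simp
  finally show ?thesis .
qed

lemma dvd_sigma: "(k::nat) < N \<Longrightarrow> l < N \<Longrightarrow> N dvd (k + (N - l) mod N) \<longleftrightarrow> k = l"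
proof (cases "l = 0")
  case True
  assume "k < N" "l < N"
  then show ?thesis using True by (auto dest: dvd_imp_le)
next
  case False
  assume k: "k < N" and l: "l < N"
  have "N - l < N" using False l by simp
  then have e: "k + (N - l) mod N = k + (N - l)" by simp
  show ?thesis
  proof
    assume "N dvd (k + (N - l) mod N)"
    then obtain q where q: "k + (N - l) = N * q" using e by (auto elim: dvdE)
    have "q < 2"
    proof (rule ccontr)
      assume "\<not> q < 2"
      then have "N*2 \<le> N*q" by simp
      then show False using q k l by linarith
    qed
    moreover have "q \<noteq> 0"
    proof
      assume "q = 0" then have "k + (N - l) = 0" using q by simp
      then show False using l False by linarith
    qed
    ultimately have "q = 1" by simp
    then show "k = l" using q l by simp
  next
    assume "k = l" then show "N dvd (k + (N - l) mod N)" using e l by simp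
  qed
qed

lemma orth: "N > 0 \<Longrightarrow> k < N \<Longrightarrow> l < N \<Longrightarrow>
   (\<Sum>j<N. omegaN N ^ (j*k) * cnj (omegaN N ^ (j*l))) = (if k = l then of_nat N else 0)"
proof -
  assume N: "N > 0" and k: "k < N" and l: "l < N"
  have "(\<Sum>j<N. omegaN N ^ (j*k) * cnj (omegaN N ^ (j*l))) = (\<Sum>j<N. omegaN N ^ (j*(k + (N - l) mod N)))"
    using cnj_omega[OF N l] by (simp add: power_add[symmetric] algebra_simps)
  also have "\<dots> = (if k = l then of_nat N else 0)"
    using sum_omega[OF N] dvd_sigma[OF k l] by simp
  finally show ?thesis .
qed

lemma parseval_c: "N > 0 \<Longrightarrow> (\<Sum>j<N. SS N c j * cnj (SS N c j)) = of_nat N * (\<Sum>k<N. c k * cnj (c k))"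
proof -
  assume N: "N > 0"
  have "(\<Sum>j<N. SS N c j * cnj (SS N c j))
     = (\<Sum>j<N. \<Sum>k<N. \<Sum>l<N. c k * cnj (c l) * (omegaN N ^ (j*k) * cnj (omegaN N ^ (j*l))))"
    unfolding SS_def cnj_sum sum_product
    apply (rule sum.cong[OF refl])+
    apply (simp only: complex_cnj_mult mult_ac)
    done
  also have "\<dots> = (\<Sum>k<N. \<Sum>j<N. \<Sum>l<N. c k * cnj (c l) * (omegaN N ^ (j*k) * cnj (omegaN N ^ (j*l))))"
    by (rule sum.swap)
  also have "\<dots> = (\<Sum>k<N. \<Sum>l<N. \<Sum>j<N. c k * cnj (c l) * (omegaN N ^ (j*k) * cnj (omegaN N ^ (j*l))))"
    apply (rule sum.cong[OF refl])
    subgoal for k by (rule sum.swap[of "\<lambda>j l. c k * cnj (c l) * (omegaN N ^ (j*k) * cnj (omegaN N ^ (j*l)))"])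
    done
  also have "\<dots> = (\<Sum>k<N. \<Sum>l<N. c k * cnj (c l) * (\<Sum>j<N. omegaN N ^ (j*k) * cnj (omegaN N ^ (j*l))))"
    by (simp only: sum_distrib_left)
  also have "\<dots> = (\<Sum>k<N. \<Sum>l<N. c k * cnj (c l) * (if k = l then of_nat N else 0))"
    apply (rule sum.cong[OF refl])+
    subgoal for k l using orth[OF N, of k l] by simp
    done
  also have "\<dots> = of_nat N * (\<Sum>k<N. c k * cnj (c k))"
  proof -
    have "\<And>k. (\<Sum>l<N. c k * cnj (c l) * (if k = l then of_nat N else 0)) = 
       (\<Sum>l<N. if l = k then of_nat N * (c k * cnj (c k)) else 0)"
      by (rule sum.cong[OF refl]) auto
    then show ?thesis by (simp add: sum_distrib_left)
  qed
  finally show ?thesis .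
qed

lemma parseval: "N > 0 \<Longrightarrow> (\<Sum>j<N. (cmod (SS N c j))^2) = real N * (\<Sum>k<N. (cmod (c k))^2)"
proof -
  assume N: "N > 0"
  have "complex_of_real (\<Sum>j<N. (cmod (SS N c j))^2) = complex_of_real (real N * (\<Sum>k<N. (cmod (c k))^2))"
    using parseval_c[OF N, of c] by (simp only: of_real_sum of_real_mult complex_norm_square of_real_of_nat_eq)
  then show ?thesis by (simp only: of_real_eq_iff)
qed

lemma sigma_inv: "(k::nat) < N \<Longrightarrow> (N - (N - k) mod N) mod N = k"
proof (cases "k = 0")
  case True then show ?thesis by simp
next
  case False
  assume k: "k < N"
  then have "N - k < N" using False by simp
  then have "(N - k) mod N = N - k" by simp
  then show ?thesis using k by simp
qed

lemma sigma_lt: "0 < N \<Longrightarrow> (N - (k::nat)) mod N < N" by simp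

lemma sym_real: assumes N: "N > 0" and s: "symc N c" shows "cnj (SS N c j) = SS N c j"
proof -
  have "cnj (SS N c j) = (\<Sum>k<N. omegaN N ^ (j * ((N - k) mod N)) * c ((N - k) mod N))"
    unfolding SS_def cnj_sum
  proof (rule sum.cong[OF refl])
    fix k assume "k \<in> {..<N}"
    then have k: "k < N" by simp
    have "c ((N - k) mod N) = cnj (c ((N - (N - k) mod N) mod N))"
      using s sigma_lt[OF N] unfolding symc_def by blast
    then have "cnj (c k) = c ((N - k) mod N)" using sigma_inv[OF k] by simp
    then show "cnj (omegaN N ^ (j * k) * c k) = omegaN N ^ (j * ((N - k) mod N)) * c ((N - k) mod N)"
      using cnj_omega[OF N k] by simp
  qed
  also have "\<dots> = SS N c j"
    unfolding SS_def
    apply (rule sum.reindex_bij_witness[where i="\<lambda>k. (N - k) mod N" and j="\<lambda>k. (N - k) mod N"])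
    subgoal for a using sigma_inv[of a N] by simp
    subgoal using N by simp
    subgoal for a using sigma_inv[of a N] by simp
    subgoal using N by simp
    subgoal by (rule refl)
    done
  finally show ?thesis .
qed

lemma sym_Re_sq: assumes N: "N > 0" and s: "symc N c" shows "(Re (SS N c j))^2 = (cmod (SS N c j))^2"
proof -
  have "Im (cnj (SS N c j)) = Im (SS N c j)" using sym_real[OF N s, of j] by simp
  then have "Im (SS N c j) = 0" by simp
  then show ?thesis by (simp add: cmod_def)
qed

lemma parseval_Re: assumes N: "N > 0" and s: "symc N c"
  shows "(\<Sum>j<N. (Re (SS N c j))^2) = real N * (\<Sum>k<N. (cmod (c k))^2)"
  using parseval[OF N, of c] sym_Re_sq[OF N s] by simp

lemma mean_SS: assumes N: "N > 0" shows "(\<Sum>j<N. SS N c j) = of_nat N * c 0"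
proof -
  have "(\<Sum>j<N. SS N c j) = (\<Sum>k<N. \<Sum>j<N. omegaN N ^ (j*k) * c k)"
    unfolding SS_def by (rule sum.swap)
  also have "\<dots> = (\<Sum>k<N. c k * (\<Sum>j<N. omegaN N ^ (j*k)))"
    by (simp add: sum_distrib_left mult_ac)
  also have "\<dots> = (\<Sum>k<N. if k = 0 then c 0 * of_nat N else 0)"
  proof (rule sum.cong[OF refl])
    fix k assume "k \<in> {..<N}"
    then have "N dvd k \<longleftrightarrow> k = 0" by (auto dest: dvd_imp_le)
    then show "c k * (\<Sum>j<N. omegaN N ^ (j*k)) = (if k = 0 then c 0 * of_nat N else 0)"
      using sum_omega[OF N, of k] by auto
  qed
  also have "\<dots> = of_nat N * c 0" using N by simp
  finally show ?thesis .
qed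

lemma mean_Re: assumes N: "N > 0" shows "(\<Sum>j<N. Re (SS N c j)) = real N * Re (c 0)"
proof -
  have "(\<Sum>j<N. Re (SS N c j)) = Re (\<Sum>j<N. SS N c j)" by simp
  then show ?thesis using mean_SS[OF N, of c] by simp
qed

lemma cs_weighted:
  fixes a c :: "nat \<Rightarrow> real"
  assumes "\<And>i. i \<in> I \<Longrightarrow> c i > 0"
  shows "(\<Sum>i\<in>I. a i)^2 \<le> (\<Sum>i\<in>I. c i) * (\<Sum>i\<in>I. (a i)^2 / c i)"
proof -
  have "(\<Sum>i\<in>I. a i) = (\<Sum>i\<in>I. sqrt (c i) * (a i / sqrt (c i)))"
    apply (rule sum.cong[OF refl])
    subgoal for i using assms[of i] by (simp add: less_imp_le)
    done
  then have "(\<Sum>i\<in>I. a i)^2 \<le> (\<Sum>i\<in>I. (sqrt (c i))^2) * (\<Sum>i\<in>I. (a i / sqrt (c i))^2)"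
    using Cauchy_Schwarz_ineq_sum[of "\<lambda>i. sqrt (c i)" "\<lambda>i. a i / sqrt (c i)" I] by simp
  also have "\<dots> = (\<Sum>i\<in>I. c i) * (\<Sum>i\<in>I. (a i)^2 / c i)"
    using assms by (intro arg_cong2[where f="(*)"] sum.cong refl) (auto simp: power_divide less_imp_le)
  finally show ?thesis .
qed

lemma holder4:
  fixes a c :: "nat \<Rightarrow> real"
  assumes c: "\<And>i. i \<in> I \<Longrightarrow> c i > 0"
  shows "(\<Sum>i\<in>I. a i)^4 \<le> (\<Sum>i\<in>I. c i)^3 * (\<Sum>i\<in>I. (a i)^4 / (c i)^3)"
proof -
  have C0: "0 \<le> (\<Sum>i\<in>I. c i)" using c by (intro sum_nonneg) (simp add: less_imp_le)
  have 1: "(\<Sum>i\<in>I. a i)^2 \<le> (\<Sum>i\<in>I. c i) * (\<Sum>i\<in>I. (a i)^2 / c i)" by (rule cs_weighted[OF c])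
  have 2: "(\<Sum>i\<in>I. (a i)^2 / c i)^2 \<le> (\<Sum>i\<in>I. c i) * (\<Sum>i\<in>I. ((a i)^2 / c i)^2 / c i)"
    by (rule cs_weighted[OF c])
  have "(\<Sum>i\<in>I. a i)^4 = ((\<Sum>i\<in>I. a i)^2)^2" by simp
  also have "\<dots> \<le> ((\<Sum>i\<in>I. c i) * (\<Sum>i\<in>I. (a i)^2 / c i))^2"
    by (rule power_mono[OF 1]) simp
  also have "\<dots> = (\<Sum>i\<in>I. c i)^2 * (\<Sum>i\<in>I. (a i)^2 / c i)^2" by (simp add: power_mult_distrib)
  also have "\<dots> \<le> (\<Sum>i\<in>I. c i)^2 * ((\<Sum>i\<in>I. c i) * (\<Sum>i\<in>I. ((a i)^2 / c i)^2 / c i))"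
    by (rule mult_left_mono[OF 2]) simp
  also have "\<dots> = (\<Sum>i\<in>I. c i)^3 * (\<Sum>i\<in>I. (a i)^4 / (c i)^3)"
    by (simp add: power_divide eval_nat_numeral field_simps)
  finally show ?thesis .
qed

definition kp :: "nat \<Rightarrow> nat \<Rightarrow> nat" where "kp N k = min k (N - k)"

definition Dm :: "nat \<Rightarrow> nat \<Rightarrow> nat set" where
  "Dm N m = {k. 1 \<le> k \<and> k < N \<and> 2^m \<le> kp N k \<and> kp N k < 2^(m+1)}"

definition blk :: "nat \<Rightarrow> nat \<Rightarrow> (nat \<Rightarrow> complex) \<Rightarrow> nat \<Rightarrow> complex" where
  "blk N m w k = (if k \<in> Dm N m then w k else 0)"

lemma Dm_sub: "Dm N m \<subseteq> {..<N}" by (auto simp: Dm_def)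

lemma finite_Dm: "finite (Dm N m)" using Dm_sub finite_subset by blast

lemma card_Dm: "card (Dm N m) \<le> 2^(m+1)"
proof -
  let ?A = "{2^m..<2^(m+1)::nat}"
  have "Dm N m \<subseteq> ?A \<union> (\<lambda>i. N - i) ` ?A"
  proof
    fix k assume k: "k \<in> Dm N m"
    show "k \<in> ?A \<union> (\<lambda>i. N - i) ` ?A"
    proof (cases "k \<le> N - k")
      case True then show ?thesis using k by (auto simp: Dm_def kp_def)
    next
      case False
      then have "kp N k = N - k" by (simp add: kp_def)
      moreover have "k = N - (N - k)" using k by (auto simp: Dm_def)
      ultimately have "N - k \<in> ?A" using k unfolding Dm_def by auto
      then have "N - (N - k) \<in> (\<lambda>i. N - i) ` ?A" by (rule imageI)
      then show ?thesis using \<open>k = N - (N - k)\<close> by simp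
    qed
  qed
  then have "card (Dm N m) \<le> card (?A \<union> (\<lambda>i. N - i) ` ?A)" by (intro card_mono) auto
  also have "\<dots> \<le> card ?A + card ((\<lambda>i. N - i) ` ?A)" by (rule card_Un_le)
  also have "\<dots> \<le> card ?A + card ?A" using card_image_le[of ?A "\<lambda>i. N - i"] by simp
  also have "\<dots> = 2^(m+1)" by simp
  finally show ?thesis .
qed

lemma sym_blk: assumes s: "symc N w" shows "symc N (blk N m w)"
  unfolding symc_def
proof (intro allI impI)
  fix k assume k: "k < N"
  show "blk N m w k = cnj (blk N m w ((N - k) mod N))"
  proof (cases "k = 0")
    case True then show ?thesis by (simp add: blk_def Dm_def)
  next
    case False
    then have sk: "(N - k) mod N = N - k" using k by simp
    have kpe: "kp N (N - k) = kp N k" using k by (simp add: kp_def)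
    have iff: "(N - k) \<in> Dm N m \<longleftrightarrow> k \<in> Dm N m"
      using False k kpe by (auto simp: Dm_def)
    have "w k = cnj (w ((N - k) mod N))" using s k unfolding symc_def by blast
    then show ?thesis using iff sk by (simp add: blk_def)
  qed
qed

lemma pow2_unique: "2^a \<le> (x::nat) \<Longrightarrow> x < 2^(a+1) \<Longrightarrow> 2^b \<le> x \<Longrightarrow> x < 2^(b+1) \<Longrightarrow> a = b"
proof (rule ccontr)
  assume h: "2^a \<le> x" "x < 2^(a+1)" "2^b \<le> x" "x < 2^(b+1)" "a \<noteq> b"
  show False
  proof (cases "a < b")
    case True
    then have "(2::nat)^(a+1) \<le> 2^b" by (intro power_increasing) auto
    then show False using h by linarith
  next
    case False
    then have "b < a" using h by simp
    then have "(2::nat)^(b+1) \<le> 2^a" by (intro power_increasing) auto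
    then show False using h by linarith
  qed
qed

lemma blk_sum: assumes w0: "w 0 = 0" and k: "k < N"
  shows "(\<Sum>m<N. blk N m w k) = w k"
proof (cases "k = 0")
  case True then show ?thesis using w0 by (simp add: blk_def Dm_def)
next
  case False
  let ?x = "kp N k"
  have xpos: "?x > 0" using False k by (simp add: kp_def)
  define m0 where "m0 = floorlog (2::nat) ?x - 1"
  have fb: "2 ^ (floorlog (2::nat) ?x - 1) \<le> ?x \<and> ?x < 2 ^ (floorlog (2::nat) ?x)"
    using floorlog_bounds[OF xpos, of 2] by simp
  have "floorlog 2 ?x \<noteq> 0" using fb xpos by (metis less_one not_gr0 power_0)
  then have m0a: "2^m0 \<le> ?x" "?x < 2^(m0+1)" using fb by (auto simp: m0_def)
  have "?x \<le> k" by (simp add: kp_def)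
  then have "m0 < N" using m0a k less_exp[of m0] by linarith
  have mem: "k \<in> Dm N m \<longleftrightarrow> m = m0" for m
    using pow2_unique[OF m0a, of m] m0a False k by (auto simp: Dm_def)
  have "(\<Sum>m<N. blk N m w k) = (\<Sum>m<N. if m = m0 then w k else 0)"
    by (rule sum.cong[OF refl]) (simp add: blk_def mem)
  also have "\<dots> = w k" using \<open>m0 < N\<close> by simp
  finally show ?thesis .
qed

lemma SS_blk: assumes w0: "w 0 = 0" shows "SS N w j = (\<Sum>m<N. SS N (blk N m w) j)"
proof -
  have "SS N w j = (\<Sum>k<N. omegaN N ^ (j*k) * (\<Sum>m<N. blk N m w k))"
    unfolding SS_def by (rule sum.cong[OF refl]) (simp add: blk_sum[of w, OF w0])
  also have "\<dots> = (\<Sum>k<N. \<Sum>m<N. omegaN N ^ (j*k) * blk N m w k)"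
    by (simp only: sum_distrib_left)
  also have "\<dots> = (\<Sum>m<N. SS N (blk N m w) j)"
    unfolding SS_def by (rule sum.swap)
  finally show ?thesis .
qed

lemma SS_norm: "cmod (SS N c j) \<le> (\<Sum>k<N. cmod (c k))"
proof -
  have "cmod (SS N c j) \<le> (\<Sum>k<N. cmod (omegaN N ^ (j*k) * c k))"
    unfolding SS_def by (rule norm_sum)
  also have "\<dots> = (\<Sum>k<N. cmod (c k))" by (simp add: norm_mult)
  finally show ?thesis .
qed

lemma sum_ind_le:
  fixes f :: "nat \<Rightarrow> real" and b :: real
  assumes "\<And>k. k \<in> Dm N m \<Longrightarrow> f k \<le> b" "\<And>k. k \<notin> Dm N m \<Longrightarrow> f k = 0"
  shows "(\<Sum>k<N. f k) \<le> card (Dm N m) * b"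
proof -
  have "(\<Sum>k<N. f k) = (\<Sum>k\<in>Dm N m. f k)"
    using Dm_sub assms(2) by (intro sum.mono_neutral_right) auto
  also have "\<dots> \<le> (\<Sum>k\<in>Dm N m. b)" using assms(1) by (rule sum_mono)
  also have "\<dots> = card (Dm N m) * b" by simp
  finally show ?thesis .
qed

lemma geo_le: assumes "0 \<le> s" "s < (1::real)" shows "(\<Sum>m<n. s^m) \<le> 1 / (1 - s)"
proof -
  have "s \<noteq> 1" using assms by simp
  then have "(\<Sum>m<n. s^m) = (1 - s^n) / (1 - s)" by (simp add: sum_gp_strict)
  also have "\<dots> \<le> 1 / (1 - s)" using assms by (intro divide_right_mono) auto
  finally show ?thesis .
qed

lemma card_Dm_real: "real (card (Dm N m)) \<le> 2^(m+1)"
proof -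
  have "real (card (Dm N m)) \<le> real (2^(m+1))" using card_Dm[of N m] by (simp only: of_nat_le_iff)
  then show ?thesis by simp
qed

lemma quartic_bound:
  fixes w :: "nat \<Rightarrow> complex" and D \<alpha> :: real
  assumes N: "N > 0" and s: "symc N w" and w0: "w 0 = 0"
    and bd: "\<And>k. 1 \<le> k \<Longrightarrow> k < N \<Longrightarrow> cmod (w k) \<le> D * real (kp N k) powr (\<alpha> - 1)"
    and al: "\<alpha> < 1/4" and D: "0 \<le> D"
  shows "(\<Sum>j<N. (Re (SS N w j))^4) \<le> 8 * D^4 / (1 - sqrt (sqrt (2 powr (4*\<alpha> - 1))))^4 * real N"
proof -
  define t where "t = (2::real) powr (\<alpha> - 1)"
  define q where "q = (2::real) powr (4*\<alpha> - 1)"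
  define s where "s = sqrt (sqrt q)"
  have t0: "t > 0" by (simp add: t_def)
  have q0: "q > 0" by (simp add: q_def)
  have q1: "q < 1"
  proof -
    have "q < 2 powr 0" unfolding q_def using al by (intro powr_less_mono) auto
    then show ?thesis by simp
  qed
  have s0: "s > 0" using q0 by (simp add: s_def)
  have s1: "s < 1" using q1 q0 by (simp add: s_def)
  have s2: "s^2 = sqrt q" using q0 by (simp add: s_def)
  have "s^4 = (s^2)^2" by (subst power_mult[symmetric]) simp
  then have s4: "s^4 = q" using s2 q0 by simp
  have q_eq: "8 * t^4 = q"
  proof -
    have "t^4 = 2 powr (4 * (\<alpha> - 1))" unfolding t_def by (simp add: powr_power)
    moreover have e8: "(2::real) powr 3 = 8" by simp
    moreover have e: "4*\<alpha> - 1 = 3 + 4*(\<alpha>-1)" by simp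
    moreover have "q = 2 powr 3 * 2 powr (4*(\<alpha>-1))" unfolding q_def e by (rule powr_add)
    ultimately show ?thesis by simp
  qed
  have pw: "real (2^m) powr (\<alpha> - 1) = t^m" for m :: nat
  proof -
    have "real (2^m) = 2 powr (real m)" by (simp add: powr_realpow)
    then have "real (2^m) powr (\<alpha> - 1) = 2 powr (real m * (\<alpha> - 1))" by (simp add: powr_powr)
    also have "\<dots> = t^m" unfolding t_def by (simp add: powr_power)
    finally show ?thesis .
  qed
  define a where "a m = D * t^m" for m :: nat
  have a0: "a m \<ge> 0" for m using D t0 by (simp add: a_def)
  define Y where "Y m j = Re (SS N (blk N m w) j)" for m j
  have bk: "cmod (blk N m w k) \<le> a m" for m k
  proof (cases "k \<in> Dm N m")
    case True
    then have k: "1 \<le> k" "k < N" "2^m \<le> kp N k" by (auto simp: Dm_def)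
    have "real (kp N k) powr (\<alpha> - 1) \<le> real (2^m) powr (\<alpha> - 1)"
      using k al by (intro powr_mono2') auto
    then have "D * real (kp N k) powr (\<alpha> - 1) \<le> a m"
      using D pw[of m] by (simp add: a_def mult_left_mono)
    then show ?thesis using bd[OF k(1,2)] True by (simp add: blk_def)
  next
    case False then show ?thesis using a0 by (simp add: blk_def)
  qed
  have sup: "\<bar>Y m j\<bar> \<le> 2^(m+1) * a m" for m j
  proof -
    have "\<bar>Y m j\<bar> \<le> cmod (SS N (blk N m w) j)" unfolding Y_def by (rule abs_Re_le_cmod)
    also have "\<dots> \<le> (\<Sum>k<N. cmod (blk N m w k))" by (rule SS_norm)
    also have "\<dots> \<le> real (card (Dm N m)) * a m"
      apply (rule sum_ind_le)
      subgoal for k using bk[of m k] by (simp add: blk_def)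
      subgoal for k by (simp add: blk_def)
      done
    also have "\<dots> \<le> 2^(m+1) * a m"
      using card_Dm_real[of N m] a0[of m] by (intro mult_right_mono) simp_all
    finally show ?thesis .
  qed
  have L2: "(\<Sum>j<N. (Y m j)^2) \<le> real N * (2^(m+1) * (a m)^2)" for m
  proof -
    have "(\<Sum>j<N. (Y m j)^2) = real N * (\<Sum>k<N. (cmod (blk N m w k))^2)"
      unfolding Y_def by (rule parseval_Re[OF N sym_blk[OF s]])
    also have "\<dots> \<le> real N * (real (card (Dm N m)) * (a m)^2)"
      apply (intro mult_left_mono sum_ind_le)
      subgoal for k using bk[of m k] by (simp add: blk_def power_mono)
      subgoal for k by (simp add: blk_def)
      subgoal by simp
      done
    also have "\<dots> \<le> real N * (2^(m+1) * (a m)^2)"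
      using card_Dm_real[of N m] by (intro mult_left_mono mult_right_mono) simp_all
    finally show ?thesis .
  qed
  have L4: "(\<Sum>j<N. (Y m j)^4) \<le> real N * 8 * D^4 * q^m" for m
  proof -
    have "(8::real)^m = (2*(2*2))^m" by simp
    then have e8m: "(8::real)^m = 2^m * (2^m * 2^m)" by (simp only: power_mult_distrib)
    have "(\<Sum>j<N. (Y m j)^4) \<le> (\<Sum>j<N. (2^(m+1) * a m)^2 * (Y m j)^2)"
    proof (rule sum_mono)
      fix j
      have "(Y m j)^2 \<le> (2^(m+1) * a m)^2"
        using sup[of m j] by (metis abs_ge_zero power2_abs power_mono)
      then have "(Y m j)^2 * (Y m j)^2 \<le> (2^(m+1) * a m)^2 * (Y m j)^2"
        by (intro mult_right_mono) auto
      then show "(Y m j)^4 \<le> (2^(m+1) * a m)^2 * (Y m j)^2" by (simp add: eval_nat_numeral)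
    qed
    also have "\<dots> = (2^(m+1) * a m)^2 * (\<Sum>j<N. (Y m j)^2)" by (simp add: sum_distrib_left)
    also have "\<dots> \<le> (2^(m+1) * a m)^2 * (real N * (2^(m+1) * (a m)^2))"
      by (intro mult_left_mono L2) simp
    also have "\<dots> = real N * 8 * D^4 * (8 * t^4)^m"
      using e8m by (simp add: a_def power_mult_distrib power_add eval_nat_numeral mult_ac flip: power_mult)
    also have "\<dots> = real N * 8 * D^4 * q^m" by (simp add: q_eq)
    finally show ?thesis .
  qed
  define G where "G = (\<Sum>m<N. s^m)"
  have G0: "G \<ge> 0" unfolding G_def using s0 by (intro sum_nonneg) simp
  have Gle: "G \<le> 1 / (1 - s)" unfolding G_def using s0 s1 by (intro geo_le) auto
  have yj: "Re (SS N w j) = (\<Sum>m<N. Y m j)" for j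
    unfolding Y_def by (simp add: SS_blk[of w, OF w0])
  have "(\<Sum>j<N. (Re (SS N w j))^4) \<le> (\<Sum>j<N. G^3 * (\<Sum>m<N. (Y m j)^4 / (s^m)^3))"
  proof (rule sum_mono)
    fix j
    show "(Re (SS N w j))^4 \<le> G^3 * (\<Sum>m<N. (Y m j)^4 / (s^m)^3)"
      unfolding yj G_def by (rule holder4) (use s0 in simp)
  qed
  also have "\<dots> = G^3 * (\<Sum>j<N. \<Sum>m<N. (Y m j)^4 / (s^m)^3)"
    by (simp only: sum_distrib_left)
  also have "\<dots> = G^3 * (\<Sum>m<N. \<Sum>j<N. (Y m j)^4 / (s^m)^3)"
    by (subst sum.swap) (rule refl)
  also have "\<dots> = G^3 * (\<Sum>m<N. (\<Sum>j<N. (Y m j)^4) / (s^m)^3)"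
    by (simp only: sum_divide_distrib)
  also have "\<dots> \<le> G^3 * (\<Sum>m<N. (real N * 8 * D^4 * q^m) / (s^m)^3)"
    using G0 s0 by (intro mult_left_mono sum_mono divide_right_mono L4) auto
  also have "\<dots> = G^3 * (real N * 8 * D^4 * G)"
  proof -
    have "(real N * 8 * D^4 * q^m) / (s^m)^3 = real N * 8 * D^4 * s^m" for m
    proof -
      have e1: "q^m = s^(4*m)" by (simp only: s4[symmetric] power_mult[symmetric])
      have e2: "(s^m)^3 * s^m = s^(m*3+m)" by (simp only: power_mult[symmetric] power_add[symmetric])
      have "4*m = m*3+m" by simp
      then have "q^m = (s^m)^3 * s^m" using e1 e2 by (simp only:)
      moreover have "(s^m)^3 > 0" using s0 by simp
      ultimately show ?thesis by simp
    qed
    then show ?thesis by (simp add: G_def sum_distrib_left)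
  qed
  also have "\<dots> = 8 * D^4 * G^4 * real N" by (simp add: eval_nat_numeral)
  also have "\<dots> \<le> 8 * D^4 * (1 / (1 - s))^4 * real N"
    using G0 Gle D by (intro mult_right_mono mult_left_mono power_mono) auto
  finally show ?thesis by (simp add: s_def q_def power_divide)
qed

lemma sin_jordan:
  fixes u :: real assumes "0 \<le> u" "u \<le> pi/2"
  shows "2 * u / pi \<le> sin u"
proof -
  have cc: "concave_on {0..pi} sin"
    by (rule f''_le0_imp_concave[where f'=cos and f''="\<lambda>x. - sin x"])
       (auto intro!: derivative_eq_intros sin_ge_zero)
  define t where "t = 2*u/pi"
  have t: "0 \<le> t" "t \<le> 1" using assms pi_gt_zero by (auto simp: t_def field_simps)
  have "(1 - t) * sin 0 + t * sin (pi/2) \<le> sin ((1 - t) *\<^sub>R 0 + t *\<^sub>R (pi/2))"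
    by (rule concave_onD[OF cc t]) auto
  moreover have "t *\<^sub>R (pi/2) = u" using pi_gt_zero by (simp add: t_def)
  ultimately show ?thesis by (simp add: t_def)
qed

lemma lam_lower:
  fixes \<mu> :: real
  assumes N: "N \<ge> 3" and mu: "\<mu> > 1" and k: "1 \<le> k" "k < N"
  shows "lam (\<mu> * gamma1 N) N k \<ge> (\<mu> - 1) * (2 * real (kp N k) / pi)^2"
proof -
  define x where "x = pi / real N"
  define kk where "kk = kp N k"
  have Npos: "real N > 0" using N by simp
  have x0: "x > 0" using Npos by (simp add: x_def)
  have kk1: "1 \<le> kk" using k by (simp add: kk_def kp_def)
  have kk2: "2 * kk \<le> N" using k by (simp add: kk_def kp_def)
  have kkx: "real kk * x \<le> pi/2"
  proof -
    have "real (2*kk) \<le> real N" using kk2 by (simp only: of_nat_le_iff)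
    then have "2 * real kk * pi \<le> real N * pi" by (intro mult_right_mono) auto
    then show ?thesis using Npos by (simp add: x_def field_simps)
  qed
  have xle: "x \<le> real kk * x" using kk1 x0 by simp
  have sk: "sin (real k * pi / real N) = sin (real kk * x)"
  proof (cases "k \<le> N - k")
    case True then have "kk = k" by (simp add: kk_def kp_def)
    then show ?thesis by (simp add: x_def)
  next
    case False then have "kk = N - k" by (simp add: kk_def kp_def)
    then have "real kk = real N - real k" using k by simp
    then have "real kk * x = (real N - real k) * pi / real N" by (simp add: x_def)
    also have "\<dots> = pi - real k * pi / real N" using Npos by (simp add: field_simps)
    finally have "real kk * x = pi - real k * pi / real N" .
    then show ?thesis by simp
  qed
  define u where "u = sin x"
  define s' where "s' = sin (real kk * x)"
  have "x < pi" using xle kkx pi_gt_zero by linarith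
  then have u0: "u > 0" unfolding u_def using x0 by (intro sin_gt_zero) auto
  have ux: "u \<le> x" unfolding u_def using x0 by (intro sin_x_le_x) simp
  have su: "u \<le> s'" unfolding u_def s'_def
    using sin_mono_le_eq[of x "real kk * x"] x0 xle kkx by auto
  have sj: "2 * (real kk * x) / pi \<le> s'" unfolding s'_def
    using x0 kk1 kkx by (intro sin_jordan) auto
  define r where "r = s' / u"
  have r1: "r \<ge> 1" using su u0 by (simp add: r_def)
  have r2: "r \<ge> 2 * real kk / pi"
  proof -
    have "2 * real kk / pi * u \<le> 2 * real kk / pi * x" using ux kk1 by (intro mult_left_mono) auto
    also have "\<dots> = 2 * (real kk * x) / pi" by simp
    also have "\<dots> \<le> s'" by (rule sj)
    finally show ?thesis using u0 by (simp add: r_def field_simps)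
  qed
  have lam_eq: "lam (\<mu> * gamma1 N) N k = \<mu> * r^2 - 1"
    unfolding lam_def gamma1_def sk using u0 by (simp add: r_def u_def s'_def x_def power_divide field_simps)
  have "(\<mu> - 1) * (2 * real kk / pi)^2 \<le> (\<mu> - 1) * r^2"
    using r2 mu by (intro mult_left_mono power_mono) auto
  also have "\<dots> \<le> \<mu> * r^2 - 1"
  proof -
    have "1 \<le> r^2" using r1 by (simp add: one_le_power)
    then show ?thesis by (simp add: algebra_simps)
  qed
  finally show ?thesis using lam_eq by (simp add: kk_def)
qed

lemma coef_bound:
  fixes \<mu> \<alpha> \<delta> :: real
  assumes N: "N \<ge> 3" and mu: "\<mu> > 1" and k: "1 \<le> k" "k < N" and d: "\<delta> > 0"
    and zk: "cmod zk \<le> \<delta> * r_kN \<alpha> N k / sqrt (lam (\<mu> * gamma1 N) N k)"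
  shows "cmod zk \<le> (\<delta> * (2 * pi / sqrt (\<mu> - 1))) * real (kp N k) powr (\<alpha> - 1)"
proof -
  define kk where "kk = real (kp N k)"
  have kk1: "kk \<ge> 1" using k by (simp add: kk_def kp_def)
  have "sqrt ((\<mu> - 1) * (2 * kk / pi)^2) \<le> sqrt (lam (\<mu> * gamma1 N) N k)"
    using lam_lower[OF N mu k] by (simp add: kk_def)
  then have sl: "sqrt (\<mu> - 1) * (2 * kk / pi) \<le> sqrt (lam (\<mu> * gamma1 N) N k)"
    using kk1 mu by (simp add: real_sqrt_mult)
  have pos: "sqrt (\<mu> - 1) * (2 * kk / pi) > 0" using mu kk1 by simp
  have rk: "r_kN \<alpha> N k = 4 * kk powr \<alpha>" by (simp add: r_kN_def kk_def kp_def)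
  have rk0: "r_kN \<alpha> N k \<ge> 0" using rk by simp
  have "\<delta> * r_kN \<alpha> N k / sqrt (lam (\<mu> * gamma1 N) N k) \<le> \<delta> * r_kN \<alpha> N k / (sqrt (\<mu> - 1) * (2 * kk / pi))"
  proof -
    have "sqrt (lam (\<mu> * gamma1 N) N k) > 0" using sl pos by linarith
    then show ?thesis using d rk0 sl pos mu kk1 by (intro divide_left_mono mult_nonneg_nonneg mult_pos_pos) auto
  qed
  also have "\<dots> = (\<delta> * (2 * pi / sqrt (\<mu> - 1))) * (kk powr \<alpha> / kk)"
    using mu kk1 by (simp add: rk field_simps)
  also have "kk powr \<alpha> / kk = kk powr (\<alpha> - 1)"
    using kk1 by (simp add: powr_diff)
  finally show ?thesis using zk by (simp add: kk_def)
qed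

lemma poly_id: "((c::real) + y)^4/4 - (c + y)^2/2
   = (c^4/4 - c^2/2) + (c^3 - c) * y + (3/2*c^2 - 1/2) * y^2 + c * y^3 + y^4/4"
  by (simp add: field_simps eval_nat_numeral)

lemma sum_split0: "(N::nat) > 0 \<Longrightarrow> (\<Sum>k<N. f k) = f 0 + (\<Sum>k=1..N-1. (f k :: 'a::comm_monoid_add))"
proof -
  assume N: "N > 0"
  have "{..<N} = insert 0 {1..N-1}" using N by auto
  then show ?thesis by simp
qed

lemma cmod_1_omega: "(cmod (1 - omegaN N ^ k))^2 = 4 * (sin (real k * pi / real N))^2"
proof -
  define a where "a = real k * pi / real N"
  have th: "2 * pi * real k / real N = 2 * a" by (simp add: a_def)
  have "(cmod (1 - omegaN N ^ k))^2 = (1 - cos (2*a))^2 + (sin (2*a))^2"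
    by (simp add: omega_pow th cmod_power2)
  also have "\<dots> = 2 - 2 * cos (2*a)"
    using sin_cos_squared_add[of "2*a"] by (simp add: power2_eq_square algebra_simps)
  also have "\<dots> = 4 * (sin a)^2" by (simp add: cos_double_sin)
  finally show ?thesis by (simp add: a_def)
qed

lemma x_split: assumes N: "N > 0"
  shows "x_of N z j = Re (z 0) + Re (SS N (\<lambda>k. if k = 0 then 0 else z k) j)"
proof -
  have "(\<Sum>k<N. omegaN N ^ (j * k) * z k)
      = (\<Sum>k<N. (if k = 0 then z 0 else 0) + omegaN N ^ (j * k) * (if k = 0 then 0 else z k))"
    by (rule sum.cong[OF refl]) auto
  also have "\<dots> = z 0 + SS N (\<lambda>k. if k = 0 then 0 else z k) j"
    using N by (simp add: sum.distrib SS_def)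
  finally show ?thesis by (simp add: x_of_def)
qed

lemma x_shift: assumes N: "N > 0"
  shows "x_of N z j - x_of N z ((j+1) mod N) = Re (SS N (\<lambda>k. (1 - omegaN N ^ k) * z k) j)"
proof -
  have e: "omegaN N ^ (((j+1) mod N) * k) = omegaN N ^ (j*k) * omegaN N ^ k" for k
  proof -
    have "omegaN N ^ (((j+1) mod N) * k) = omegaN N ^ ((((j+1) mod N) * k) mod N)"
      by (rule omega_pow_mod[OF N])
    also have "\<dots> = omegaN N ^ (((j+1) * k) mod N)" by (simp add: mod_mult_left_eq)
    also have "\<dots> = omegaN N ^ ((j+1) * k)" by (rule omega_pow_mod[OF N, symmetric])
    also have "\<dots> = omegaN N ^ (j*k) * omegaN N ^ k" by (simp add: algebra_simps power_add)
    finally show ?thesis .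
  qed
  have "(\<Sum>k<N. omegaN N ^ (j * k) * z k) - (\<Sum>k<N. omegaN N ^ (((j+1) mod N) * k) * z k)
     = SS N (\<lambda>k. (1 - omegaN N ^ k) * z k) j"
    unfolding SS_def e sum_subtractf[symmetric] by (rule sum.cong[OF refl]) (simp add: algebra_simps)
  then show ?thesis unfolding x_of_def by (metis minus_complex.sel(1))
qed

lemma sym_w: assumes N: "N > 0" and s: "symc N z" shows "symc N (\<lambda>k. if k = 0 then 0 else z k)"
  unfolding symc_def
proof (intro allI impI)
  fix k assume k: "k < N"
  show "(if k = 0 then 0 else z k) = cnj (if (N - k) mod N = 0 then 0 else z ((N - k) mod N))"
  proof (cases "k = 0")
    case True then show ?thesis by simp
  next
    case False
    then have "(N - k) mod N \<noteq> 0" using k by simp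
    moreover have "z k = cnj (z ((N - k) mod N))" using s k unfolding symc_def by blast
    ultimately show ?thesis using False by simp
  qed
qed

lemma sym_v: assumes N: "N > 0" and s: "symc N z" shows "symc N (\<lambda>k. (1 - omegaN N ^ k) * z k)"
  unfolding symc_def
proof (intro allI impI)
  fix k assume k: "k < N"
  have sk: "(N - k) mod N < N" using N by simp
  have "cnj (omegaN N ^ (1 * ((N - k) mod N))) = omegaN N ^ (1 * ((N - (N - k) mod N) mod N))"
    by (rule cnj_omega[OF N sk])
  then have co: "cnj (omegaN N ^ ((N - k) mod N)) = omegaN N ^ k" using sigma_inv[OF k] by simp
  have "z k = cnj (z ((N - k) mod N))" using s k unfolding symc_def by blast
  then show "(1 - omegaN N ^ k) * z k = cnj ((1 - omegaN N ^ ((N - k) mod N)) * z ((N - k) mod N))"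
    using co by simp
qed

lemma cube_bound: assumes d: "(d::real) > 0" shows "\<bar>y\<bar>^3 \<le> y^4 / d + d^3"
proof (cases "\<bar>y\<bar> \<le> d")
  case True
  then have "\<bar>y\<bar>^3 \<le> d^3" by (intro power_mono) auto
  moreover have "y^4 / d \<ge> 0" using d by simp
  ultimately show ?thesis by linarith
next
  case False
  then have "\<bar>y\<bar>^3 * d \<le> \<bar>y\<bar>^3 * \<bar>y\<bar>" by (intro mult_left_mono) auto
  also have "\<dots> = (\<bar>y\<bar>^2)^2" by (simp add: eval_nat_numeral)
  also have "\<dots> = (y^2)^2" by (simp only: power2_abs)
  also have "\<dots> = y^4" by (simp add: eval_nat_numeral)
  finally have "\<bar>y\<bar>^3 \<le> y^4 / d" using d by (simp add: field_simps)
  moreover have "d^3 \<ge> 0" using d by simp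
  ultimately show ?thesis by linarith
qed

theorem lemma4p8:
  fixes \<mu> \<rho> \<alpha> :: real
  assumes "\<mu> > 1" and "0 < \<rho>" and "\<rho> < 1" and "0 < \<alpha>" and "\<alpha> < 1/4"
  shows "\<exists>A5 \<delta>0::real. \<delta>0 > 0 \<and>
    (\<forall>N::nat. \<forall>\<delta>::real. \<forall>z. N \<ge> 3 \<longrightarrow> 0 < \<delta> \<longrightarrow> \<delta> < \<delta>0 \<longrightarrow>
       z \<in> Chat (\<mu> * gamma1 N) \<rho> \<alpha> N \<delta> \<longrightarrow>
       \<bar>Gt_N (\<mu> * gamma1 N) N z
          - (- 1/2 * Re (z 0) ^ 2 + 1/4 * Re (z 0) ^ 4
             + 1/2 * (\<Sum>k=1..N-1. lam (\<mu> * gamma1 N) N k * cmod (z k) ^ 2)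
             + 3/2 * Re (z 0) ^ 2 * (\<Sum>k=1..N-1. cmod (z k) ^ 2))\<bar>
        \<le> A5 * \<delta> ^ 3)"
proof -
  note mu = assms(1) and rho = assms(2) and al = assms(5)
  define Bc where "Bc = 2 * pi / sqrt (\<mu> - 1)"
  define K where "K = 8 * Bc^4 / (1 - sqrt (sqrt (2 powr (4*\<alpha> - 1))))^4"
  have Bc0: "Bc \<ge> 0" using mu by (simp add: Bc_def)
  have K0: "K \<ge> 0" by (simp add: K_def Bc0)
  show ?thesis
  proof (rule exI[where x="2*K+1"], rule exI[where x="1::real"], intro conjI allI impI)
    show "(1::real) > 0" by simp
    fix N :: nat and \<delta> :: real and z
    assume N3: "N \<ge> 3" and d0: "0 < \<delta>" and d1: "\<delta> < 1" and zC: "z \<in> Chat (\<mu> * gamma1 N) \<rho> \<alpha> N \<delta>"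
    define \<gamma> where "\<gamma> = \<mu> * gamma1 N"
    have N: "N > 0" using N3 by simp
    have NR: "real N > 0" using N by simp
    have zC': "z \<in> hatR N \<and> Re (z 0) \<in> {-1 + \<rho> <..< 1 - \<rho>} \<and>
      (\<forall>k \<in> {1..N-1}. cmod (z k) \<le> \<delta> * r_kN \<alpha> N k / sqrt (lam (\<mu> * gamma1 N) N k))"
      using zC unfolding Chat_def by blast
    then have zH: "z \<in> hatR N" and c0b: "Re (z 0) \<in> {-1 + \<rho> <..< 1 - \<rho>}"
      and zb: "\<And>k. k \<in> {1..N-1} \<Longrightarrow> cmod (z k) \<le> \<delta> * r_kN \<alpha> N k / sqrt (lam (\<mu> * gamma1 N) N k)"
      by blast+
    have symz: "symc N z" using zH unfolding hatR_def symc_def by blast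
    define c0 where "c0 = Re (z 0)"
    have c01: "\<bar>c0\<bar> \<le> 1" using c0b rho by (auto simp: c0_def)
    define w where "w = (\<lambda>k. if k = 0 then 0 else z k)"
    define v where "v = (\<lambda>k. (1 - omegaN N ^ k) * z k)"
    have symw: "symc N w" unfolding w_def by (rule sym_w[OF N symz])
    have symv: "symc N v" unfolding v_def by (rule sym_v[OF N symz])
    define y where "y j = Re (SS N w j)" for j
    define x where "x = x_of N z"
    define W where "W = (\<Sum>k=1..N-1. cmod (z k) ^ 2)"
    define Ss where "Ss = (\<Sum>k=1..N-1. (sin (real k * pi / real N))^2 * cmod (z k) ^ 2)"
    define T3 where "T3 = (\<Sum>j<N. (y j)^3)"
    define T4 where "T4 = (\<Sum>j<N. (y j)^4)"
    have hx: "x j = c0 + y j" for j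
      unfolding x_def y_def c0_def w_def by (rule x_split[OF N])
    have hs1: "(\<Sum>j<N. y j) = 0"
      unfolding y_def using mean_Re[OF N, of w] by (simp add: w_def)
    have hs2: "(\<Sum>j<N. (y j)^2) = real N * W"
    proof -
      have "(\<Sum>j<N. (y j)^2) = real N * (\<Sum>k<N. (cmod (w k))^2)"
        unfolding y_def by (rule parseval_Re[OF N symw])
      also have "(\<Sum>k<N. (cmod (w k))^2) = W"
        unfolding sum_split0[OF N] W_def by (simp add: w_def)
      finally show ?thesis .
    qed
    have hcoup: "(\<Sum>j<N. (x j - x ((j + 1) mod N))^2) = real N * (4 * Ss)"
    proof -
      have "(\<Sum>j<N. (x j - x ((j + 1) mod N))^2) = (\<Sum>j<N. (Re (SS N v j))^2)"
        unfolding x_def v_def using x_shift[OF N] by simp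
      also have "\<dots> = real N * (\<Sum>k<N. (cmod (v k))^2)" by (rule parseval_Re[OF N symv])
      also have "(\<Sum>k<N. (cmod (v k))^2) = (\<Sum>k<N. 4 * ((sin (real k * pi / real N))^2 * cmod (z k) ^ 2))"
        unfolding v_def by (rule sum.cong[OF refl]) (simp add: norm_mult power_mult_distrib cmod_1_omega)
      also have "\<dots> = 4 * Ss"
        unfolding sum_split0[OF N] Ss_def by (simp add: sum_distrib_left)
      finally show ?thesis .
    qed
    have hq: "(\<Sum>j<N. (x j)^4/4 - (x j)^2/2)
       = real N * (c0^4/4 - c0^2/2) + (c0^3 - c0) * (\<Sum>j<N. y j) + (3/2*c0^2 - 1/2) * (\<Sum>j<N. (y j)^2)
         + c0 * T3 + T4/4"
    proof -
      have "(\<Sum>j<N. (x j)^4/4 - (x j)^2/2)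
         = (\<Sum>j<N. (c0^4/4 - c0^2/2) + (c0^3 - c0) * y j + (3/2*c0^2 - 1/2) * (y j)^2 + c0 * (y j)^3 + (y j)^4/4)"
        unfolding hx by (rule sum.cong[OF refl]) (rule poly_id)
      also have "\<dots> = real N * (c0^4/4 - c0^2/2) + (c0^3 - c0) * (\<Sum>j<N. y j) + (3/2*c0^2 - 1/2) * (\<Sum>j<N. (y j)^2)
         + c0 * T3 + T4/4"
        unfolding T3_def T4_def by (simp add: sum.distrib sum_distrib_left sum_divide_distrib)
      finally show ?thesis .
    qed
    have hG: "Gt_N \<gamma> N z = (real N * (c0^4/4 - c0^2/2) + (3/2*c0^2 - 1/2) * (real N * W)
         + c0 * T3 + T4/4 + \<gamma> / 4 * (real N * (4 * Ss))) / real N"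
      unfolding Gt_N_def G_N_def F_gN_def x_def[symmetric] hq hcoup hs1 hs2 by simp
    have hlam: "(\<Sum>k=1..N-1. lam \<gamma> N k * cmod (z k) ^ 2) = - W + 2 * \<gamma> * Ss"
      unfolding lam_def W_def Ss_def
      by (simp add: algebra_simps sum.distrib sum_distrib_left sum_subtractf)
    have diff: "Gt_N \<gamma> N z - (- 1/2 * c0 ^ 2 + 1/4 * c0 ^ 4
             + 1/2 * (\<Sum>k=1..N-1. lam \<gamma> N k * cmod (z k) ^ 2)
             + 3/2 * c0 ^ 2 * W) = (c0 * T3 + T4/4) / real N"
      unfolding hG hlam using NR by (simp add: field_simps)
    have T4b: "T4 \<le> K * \<delta>^4 * real N"
    proof -
      have bd: "cmod (w k) \<le> (\<delta> * Bc) * real (kp N k) powr (\<alpha> - 1)" if "1 \<le> k" "k < N" for k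
      proof -
        have "cmod (z k) \<le> \<delta> * r_kN \<alpha> N k / sqrt (lam (\<mu> * gamma1 N) N k)"
          using zb[of k] that by simp
        then show ?thesis using coef_bound[OF N3 mu that d0] that by (simp add: w_def Bc_def)
      qed
      have "T4 \<le> 8 * (\<delta> * Bc)^4 / (1 - sqrt (sqrt (2 powr (4*\<alpha> - 1))))^4 * real N"
        unfolding T4_def y_def
        by (rule quartic_bound[OF N symw _ bd al]) (use d0 Bc0 in \<open>auto simp: w_def\<close>)
      also have "\<dots> = K * \<delta>^4 * real N" by (simp add: K_def power_mult_distrib)
      finally show ?thesis .
    qed
    have T40: "T4 \<ge> 0" unfolding T4_def by (intro sum_nonneg) simp
    have T3b: "\<bar>T3\<bar> \<le> T4 / \<delta> + real N * \<delta>^3"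
    proof -
      have "\<bar>T3\<bar> \<le> (\<Sum>j<N. \<bar>(y j)^3\<bar>)" unfolding T3_def by (rule sum_abs)
      also have "\<dots> \<le> (\<Sum>j<N. (y j)^4 / \<delta> + \<delta>^3)"
        by (intro sum_mono) (simp add: power_abs cube_bound[OF d0])
      also have "\<dots> = T4 / \<delta> + real N * \<delta>^3"
        unfolding T4_def by (simp add: sum.distrib sum_divide_distrib)
      finally show ?thesis .
    qed
    have "\<bar>(c0 * T3 + T4/4) / real N\<bar> \<le> (T4 / \<delta> + real N * \<delta>^3 + T4/4) / real N"
    proof -
      have "\<bar>c0 * T3\<bar> \<le> \<bar>T3\<bar>" using c01 by (simp add: abs_mult mult_left_le_one_le)
      then have "\<bar>c0 * T3 + T4/4\<bar> \<le> T4 / \<delta> + real N * \<delta>^3 + T4/4" using T3b T40 by linarith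
      then show ?thesis using NR by (simp add: divide_right_mono)
    qed
    also have "\<dots> = T4 / real N / \<delta> + \<delta>^3 + T4 / real N / 4" using NR by (simp add: field_simps)
    also have "\<dots> \<le> K * \<delta>^3 + \<delta>^3 + K * \<delta>^4 / 4"
    proof -
      have t: "T4 / real N \<le> K * \<delta>^4" using T4b NR by (simp add: field_simps)
      then have "T4 / real N / \<delta> \<le> K * \<delta>^4 / \<delta>" using d0 by (rule divide_right_mono[OF _ less_imp_le])
      also have "K * \<delta>^4 / \<delta> = K * \<delta>^3" using d0 by (simp add: eval_nat_numeral)
      finally have a: "T4 / real N / \<delta> \<le> K * \<delta>^3" .
      have b: "T4 / real N / 4 \<le> K * \<delta>^4 / 4" using t by (rule divide_right_mono) simp
      show ?thesis using add_mono[OF add_mono[OF a order_refl[of "\<delta>^3"]] b] .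
    qed
    also have "\<dots> \<le> (2*K+1) * \<delta>^3"
    proof -
      have "\<delta>^4 \<le> \<delta>^3" using d0 d1 by (simp add: power_decreasing eval_nat_numeral)
      then have "K * \<delta>^4 \<le> K * \<delta>^3" using K0 by (simp add: mult_left_mono)
      moreover have "0 \<le> K * \<delta>^3" using K0 d0 by simp
      moreover have "(2*K+1)*\<delta>^3 = 2*(K*\<delta>^3) + \<delta>^3" by (simp add: algebra_simps)
      ultimately show ?thesis by linarith
    qed
    finally show "\<bar>Gt_N (\<mu> * gamma1 N) N z
          - (- 1/2 * Re (z 0) ^ 2 + 1/4 * Re (z 0) ^ 4
             + 1/2 * (\<Sum>k=1..N-1. lam (\<mu> * gamma1 N) N k * cmod (z k) ^ 2)
             + 3/2 * Re (z 0) ^ 2 * (\<Sum>k=1..N-1. cmod (z k) ^ 2))\<bar>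
        \<le> (2*K+1) * \<delta> ^ 3"
      using diff by (simp add: \<gamma>_def c0_def W_def)
  qed
qed

end
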